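(* Let $x,y,z>0$. Let $s\in\mathbb{R}^n$ be a deterministic vector with $\|s\|^2/n=x$ and let $\hat s\in\mathbb{R}^n$ have i.i.d. $\mathcal{N}(0,y)$ entries. Then there is a constant $\kappa>0$ not depending on $n$ such that for all sufficiently large $n$, $$\frac{\kappa}{\sqrt n}e^{-nf(x,y,z)}\le\mathbb{P}\Big(\frac1n\|\hat s-s\|^2\le z\Big)\le e^{-nf(x,y,z)},$$ where $f(x,y,z)=\frac{x+z}{2y}-\frac{xz}{\mathsf{A}y}-\frac{\mathsf{A}}{4y}-\frac12\ln\frac{\mathsf A}{2x}$ if $z\le x+y$ and $f(x,y,z)=0$ otherwise, with $\mathsf A=\sqrt{y^2+4xz}-y$. *)

theory Defs
  imports "HOL-Probability.Probability"
begin

definition cA :: "real \<Rightarrow> real \<Rightarrow> real \<Rightarrow> real" where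
  "cA x y z = sqrt (y\<^sup>2 + 4 * x * z) - y"

definition rate_f :: "real \<Rightarrow> real \<Rightarrow> real \<Rightarrow> real" where
  "rate_f x y z =
     (if z \<le> x + y then
        (x + z) / (2 * y) - x * z / (cA x y z * y) - cA x y z / (4 * y)
          - 1/2 * ln (cA x y z / (2 * x))
      else 0)"

text \<open>Law of a vector in R^n (coordinates indexed by {0..<n}) with i.i.d.
  N(0,y) entries; y is the variance, so the standard deviation is sqrt y.\<close>
definition gauss_vec :: "nat \<Rightarrow> real \<Rightarrow> (nat \<Rightarrow> real) measure" where
  "gauss_vec n y = (\<Pi>\<^sub>M i\<in>{0..<n}. density lborel (normal_density 0 (sqrt y)))"

end

theory Submission
  imports Defs
begin


definition NN :: "real \<Rightarrow> real measure" where "NN \<sigma> = density lborel (normal_density 0 \<sigma>)"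
definition DD :: "real \<Rightarrow> real \<Rightarrow> real measure" where "DD \<sigma> a = distr (NN \<sigma>) borel (\<lambda>g. (g - a)^2)"

lemma sets_NN[measurable_cong, simp]: "sets (NN \<sigma>) = sets borel" by (simp add: NN_def)
lemma space_NN[simp]: "space (NN \<sigma>) = UNIV" by (simp add: NN_def)
lemma prob_NN: "\<sigma> > 0 \<Longrightarrow> prob_space (NN \<sigma>)" by (simp add: NN_def prob_space_normal_density)
lemma sets_DD[measurable_cong, simp]: "sets (DD \<sigma> a) = sets borel" by (simp add: DD_def)
lemma space_DD[simp]: "space (DD \<sigma> a) = UNIV" by (simp add: DD_def)
lemma prob_DD: "\<sigma> > 0 \<Longrightarrow> prob_space (DD \<sigma> a)"
  unfolding DD_def by (rule prob_space.prob_space_distr[OF prob_NN]) auto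
lemma nn_DD: "F \<in> borel_measurable borel \<Longrightarrow>
  (\<integral>\<^sup>+t. F t \<partial>DD \<sigma> a) = (\<integral>\<^sup>+g. ennreal (normal_density 0 \<sigma> g) * F ((g-a)^2) \<partial>lborel)"
  by (simp add: DD_def NN_def nn_integral_distr nn_integral_density)

definition tilt :: "real measure \<Rightarrow> real measure \<Rightarrow> real \<Rightarrow> real \<Rightarrow> bool" where
 "tilt M M' c l \<longleftrightarrow> (\<forall>F\<in>borel_measurable borel.
     (\<integral>\<^sup>+t. F t \<partial>M) = (\<integral>\<^sup>+t. ennreal (c * exp (l * t)) * F t \<partial>M'))"

lemma gauss_identity:
  fixes \<sigma> l a g :: real
  assumes "\<sigma> > 0" "1 + 2 * l * \<sigma>^2 > 0"
  defines "u \<equiv> 1 + 2 * l * \<sigma>^2"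
  shows "normal_density 0 \<sigma> g = normal_density 0 (\<sigma> / sqrt u) (a/u - a + g) * (exp(-l * a^2/u)/sqrt u * exp (l * (g-a)^2))"
proof -
  have u: "u > 0" using assms by simp
  have t2: "(\<sigma> / sqrt u)^2 = \<sigma>^2/u" using u by (simp add: power_divide)
  have sq: "sqrt (2 * pi * (\<sigma>^2/u)) * sqrt u = sqrt (2 * pi * \<sigma>^2)"
  proof -
    have "sqrt (2 * pi * (\<sigma>^2/u)) * sqrt u = sqrt (2 * pi * (\<sigma>^2/u) * u)" by (rule real_sqrt_mult[symmetric])
    also have "2 * pi * (\<sigma>^2/u) * u = 2 * pi * \<sigma>^2" using u by simp
    finally show ?thesis .
  qed
  have ex: "- ((a/u - a + g)^2)/(2 * (\<sigma>^2/u)) + (- l * a^2/u) + l * (g-a)^2 = - (g^2)/(2 * \<sigma>^2)"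
  proof -
    have hl: "l = (u - 1)/(2 * \<sigma>^2)" using assms(1) unfolding u_def by simp
    have "- ((a/u - a + g)^2)/(2 * (\<sigma>^2/u)) + (- l * a^2/u) + l * (g-a)^2 + (g^2)/(2 * \<sigma>^2) = 
       (- ((a - a * u + g * u)^2) - (u-1) * a^2 + u * (u-1) * (g-a)^2 + u * g^2)/(2 * \<sigma>^2 * u)"
      using u assms(1) unfolding hl by (simp add: field_simps power2_eq_square)
    also have "- ((a - a * u + g * u)^2) - (u-1) * a^2 + u * (u-1) * (g-a)^2 + u * g^2 = 0"
      by (simp add: algebra_simps power2_eq_square)
    finally show ?thesis by simp
  qed
  have "normal_density 0 (\<sigma> / sqrt u) (a/u - a + g) * (exp(-l * a^2/u)/sqrt u * exp (l * (g-a)^2))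
     = 1 / (sqrt (2 * pi * (\<sigma>^2/u)) * sqrt u) * exp (- ((a/u - a + g)^2)/(2 * (\<sigma>^2/u)) + (- l * a^2/u) + l * (g-a)^2)"
  proof -
    have "exp (- ((a/u - a + g)^2)/(2 * (\<sigma>^2/u)) + (- l * a^2/u) + l * (g-a)^2)
       = exp (- ((a/u - a + g)^2)/(2 * (\<sigma>^2/u))) * exp (- l * a^2/u) * exp (l * (g-a)^2)"
      by (simp only: exp_add)
    then show ?thesis unfolding normal_density_def t2 by (simp add: field_simps)
  qed
  also have "\<dots> = normal_density 0 \<sigma> g" unfolding sq ex normal_density_def by (simp add: power2_eq_square)
  finally show ?thesis by simp
qed

lemma tilt_DD:
  assumes "\<sigma> > 0" "1 + 2 * l * \<sigma>^2 > 0"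
  shows "tilt (DD \<sigma> a) (DD (\<sigma> / sqrt (1 + 2 * l * \<sigma>^2)) (a/(1 + 2 * l * \<sigma>^2)))
           (exp(-l * a^2/(1 + 2 * l * \<sigma>^2))/sqrt (1 + 2 * l * \<sigma>^2)) l"
  unfolding tilt_def
proof (intro ballI)
  fix F :: "real \<Rightarrow> ennreal" assume F[measurable]: "F \<in> borel_measurable borel"
  define u where "u = 1 + 2 * l * \<sigma>^2"
  have u: "u > 0" using assms u_def by simp
  define c where "c = exp(-l * a^2/u)/sqrt u"
  have c: "c \<ge> 0" using u by (simp add: c_def)
  have "(\<integral>\<^sup>+t. ennreal (c * exp (l * t)) * F t \<partial>DD (\<sigma> / sqrt u) (a/u))
      = (\<integral>\<^sup>+h. ennreal (normal_density 0 (\<sigma> / sqrt u) h) * (ennreal (c * exp (l * (h - a/u)^2)) * F ((h - a/u)^2)) \<partial>lborel)"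
    by (subst nn_DD) auto
  also have "\<dots> = (\<integral>\<^sup>+g. ennreal (normal_density 0 (\<sigma> / sqrt u) (a/u - a + g)) * (ennreal (c * exp (l * (a/u - a + g - a/u)^2)) * F ((a/u - a + g - a/u)^2)) \<partial>lborel)"
    by (subst nn_integral_real_affine[where c=1 and t="a/u - a"]) auto
  also have "\<dots> = (\<integral>\<^sup>+g. ennreal (normal_density 0 \<sigma> g) * F ((g-a)^2) \<partial>lborel)"
  proof (rule nn_integral_cong)
    fix g :: real
    have e: "a/u - a + g - a/u = g - a" by simp
    show "ennreal (normal_density 0 (\<sigma> / sqrt u) (a/u - a + g)) * (ennreal (c * exp (l * (a/u - a + g - a/u)^2)) * F ((a/u - a + g - a/u)^2))
        = ennreal (normal_density 0 \<sigma> g) * F ((g-a)^2)"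
    proof -
      have id: "normal_density 0 (\<sigma> / sqrt u) (a/u - a + g) * (c * exp (l * (g-a)^2)) = normal_density 0 \<sigma> g"
        using gauss_identity[OF assms, where a=a and g=g] unfolding u_def c_def by simp
      have "ennreal (normal_density 0 (\<sigma> / sqrt u) (a/u - a + g)) * (ennreal (c * exp (l * (g-a)^2)) * F ((g-a)^2))
          = ennreal (normal_density 0 (\<sigma> / sqrt u) (a/u - a + g) * (c * exp (l * (g-a)^2))) * F ((g-a)^2)"
        using c by (simp add: ennreal_mult mult.assoc)
      then show ?thesis unfolding e id .
    qed
  qed
  also have "\<dots> = (\<integral>\<^sup>+t. F t \<partial>DD \<sigma> a)" by (subst nn_DD) auto
  finally show "(\<integral>\<^sup>+t. F t \<partial>DD \<sigma> a) = (\<integral>\<^sup>+t. ennreal (exp(-l * a^2/(1 + 2 * l * \<sigma>^2))/sqrt (1 + 2 * l * \<sigma>^2) * exp (l * t)) * F t \<partial>DD (\<sigma> / sqrt (1 + 2 * l * \<sigma>^2)) (a/(1 + 2 * l * \<sigma>^2)))"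
    by (simp add: u_def c_def)
qed

lemma pfin: "prob_space M \<Longrightarrow> finite_measure M" by (simp add: prob_space_def)

lemma prob_conv:
  fixes M N :: "real measure"
  assumes "prob_space M" "prob_space N" "sets M = sets borel" "sets N = sets borel"
  shows "prob_space (M \<star> N)"
proof -
  have m: "(\<lambda>(x::real, y). x + y) \<in> measurable (M \<Otimes>\<^sub>M N) borel"
    using assms(3,4) by (simp add: measurable_cong_sets[OF sets_pair_measure_cong[OF assms(3,4)] refl])
  show ?thesis unfolding convolution_def
    by (rule prob_space.prob_space_distr[OF prob_space_pair[OF assms(1,2)] m])
qed

lemma tilt_conv:
  assumes fin: "finite_measure M" "finite_measure N" "finite_measure M'" "finite_measure N'"
  and sets[measurable_cong]: "sets M = sets borel" "sets N = sets borel" "sets M' = sets borel" "sets N' = sets borel"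
  and t1: "tilt M M' c1 l" and t2: "tilt N N' c2 l" and c: "c1 \<ge> 0" "c2 \<ge> 0"
  shows "tilt (M \<star> N) (M' \<star> N') (c1 * c2) l"
  unfolding tilt_def
proof (intro ballI)
  fix F :: "real \<Rightarrow> ennreal" assume F[measurable]: "F \<in> borel_measurable borel"
  interpret N': finite_measure N' by fact
  have "(\<integral>\<^sup>+t. F t \<partial>(M \<star> N)) = (\<integral>\<^sup>+x. \<integral>\<^sup>+y. F (x + y) \<partial>N \<partial>M)"
    using fin sets by (subst nn_integral_convolution) auto
  also have "\<dots> = (\<integral>\<^sup>+x. \<integral>\<^sup>+y. ennreal (c2 * exp (l * y)) * F (x + y) \<partial>N' \<partial>M)"
    using t2 unfolding tilt_def by (intro nn_integral_cong) auto
  also have "\<dots> = (\<integral>\<^sup>+x. ennreal (c1 * exp (l * x)) * (\<integral>\<^sup>+y. ennreal (c2 * exp (l * y)) * F (x + y) \<partial>N') \<partial>M')"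
  proof -
    have "(\<lambda>x. \<integral>\<^sup>+y. ennreal (c2 * exp (l * y)) * F (x + y) \<partial>N') \<in> borel_measurable borel"
      by measurable
    then show ?thesis using t1 unfolding tilt_def by auto
  qed
  also have "\<dots> = (\<integral>\<^sup>+x. \<integral>\<^sup>+y. ennreal (c1 * c2 * exp (l * (x+y))) * F (x + y) \<partial>N' \<partial>M')"
  proof (intro nn_integral_cong)
    fix x
    have "ennreal (c1 * exp (l * x)) * (\<integral>\<^sup>+y. ennreal (c2 * exp (l * y)) * F (x + y) \<partial>N')
       = (\<integral>\<^sup>+y. ennreal (c1 * exp (l * x)) * (ennreal (c2 * exp (l * y)) * F (x + y)) \<partial>N')"
      by (subst nn_integral_cmult) auto
    also have "\<dots> = (\<integral>\<^sup>+y. ennreal (c1 * c2 * exp (l * (x+y))) * F (x + y) \<partial>N')"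
    proof (intro nn_integral_cong)
      fix y
      have "ennreal (c1 * exp (l * x)) * ennreal (c2 * exp (l * y)) = ennreal (c1 * c2 * exp (l * (x+y)))"
        using c by (simp add: ennreal_mult[symmetric] exp_add distrib_left mult_ac)
      then show "ennreal (c1 * exp (l * x)) * (ennreal (c2 * exp (l * y)) * F (x + y)) = ennreal (c1 * c2 * exp (l * (x+y))) * F (x + y)"
        by (simp add: mult.assoc[symmetric])
    qed
    finally show "ennreal (c1 * exp (l * x)) * (\<integral>\<^sup>+y. ennreal (c2 * exp (l * y)) * F (x + y) \<partial>N')
       = (\<integral>\<^sup>+y. ennreal (c1 * c2 * exp (l * (x+y))) * F (x + y) \<partial>N')" .
  qed
  also have "\<dots> = (\<integral>\<^sup>+t. ennreal (c1 * c2 * exp (l * t)) * F t \<partial>(M' \<star> N'))"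
    using fin sets by (subst nn_integral_convolution) auto
  finally show "(\<integral>\<^sup>+t. F t \<partial>(M \<star> N)) = (\<integral>\<^sup>+t. ennreal (c1 * c2 * exp (l * t)) * F t \<partial>(M' \<star> N'))" .
qed

fun Chi :: "real \<Rightarrow> nat \<Rightarrow> real measure" where
  "Chi \<sigma> 0 = return borel 0"
| "Chi \<sigma> (Suc k) = (Chi \<sigma> k \<star> DD \<sigma> 0)"

lemma sets_Chi[simp, measurable_cong]: "sets (Chi \<sigma> k) = sets borel"
  by (cases k) auto

lemma space_Chi[simp]: "space (Chi \<sigma> k) = UNIV"
  by (cases k) auto

lemma prob_Chi: "\<sigma> > 0 \<Longrightarrow> prob_space (Chi \<sigma> k)"
  by (induction k) (auto intro!: prob_conv prob_DD prob_space_return)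

lemma tilt_return: "tilt (return borel 0) (return borel 0) 1 l"
  unfolding tilt_def by (auto simp: nn_integral_return)

lemma tilt_Chi:
  assumes "\<sigma> > 0" "1 + 2 * l * \<sigma>^2 > 0"
  shows "tilt (Chi \<sigma> k) (Chi (\<sigma> / sqrt (1 + 2 * l * \<sigma>^2)) k) ((1 / sqrt (1 + 2 * l * \<sigma>^2))^k) l"
proof (induction k)
  case 0 then show ?case using tilt_return by simp
next
  case (Suc k)
  have pos: "\<sigma> / sqrt (1 + 2 * l * \<sigma>^2) > 0" using assms by simp
  have d: "tilt (DD \<sigma> 0) (DD (\<sigma> / sqrt (1 + 2 * l * \<sigma>^2)) 0) (1 / sqrt (1 + 2 * l * \<sigma>^2)) l"
    using tilt_DD[OF assms, of 0] by simp
  show ?case using tilt_conv[OF _ _ _ _ _ _ _ _ Suc.IH d]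
    using prob_Chi[OF assms(1)] prob_Chi[OF pos] prob_DD[OF assms(1)] prob_DD[OF pos] assms
    by (simp add: pfin mult.commute)
qed

lemma meas_T:
  fixes T :: "'a::topological_space \<Rightarrow> 'b::topological_space"
  assumes "G \<in> borel_measurable borel" "continuous_on UNIV T"
  shows "(\<lambda>p. G (T p)) \<in> borel_measurable borel"
  using measurable_comp[OF borel_measurable_continuous_onI[OF assms(2)] assms(1)] by (simp add: comp_def)

lemma shearA:
  fixes G :: "real \<times> real \<Rightarrow> ennreal"
  assumes G: "G \<in> borel_measurable borel"
  shows "(\<integral>\<^sup>+x. \<integral>\<^sup>+y. G (x, y + t * x) \<partial>lborel \<partial>lborel) = (\<integral>\<^sup>+x. \<integral>\<^sup>+y. G (x, y) \<partial>lborel \<partial>lborel)"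
proof (rule nn_integral_cong)
  fix x :: real
  have m: "(\<lambda>y. G (x, y)) \<in> borel_measurable borel"
    by (rule meas_T[OF G, of "\<lambda>y. (x,y)"]) (intro continuous_intros)
  show "(\<integral>\<^sup>+y. G (x, y + t * x) \<partial>lborel) = (\<integral>\<^sup>+y. G (x, y) \<partial>lborel)"
    using nn_integral_real_affine[OF m, of 1 "t * x"] by (simp add: add.commute)
qed

lemma shearB:
  fixes G :: "real \<times> real \<Rightarrow> ennreal"
  assumes G: "G \<in> borel_measurable borel"
  shows "(\<integral>\<^sup>+x. \<integral>\<^sup>+y. G (x + t * y, y) \<partial>lborel \<partial>lborel) = (\<integral>\<^sup>+x. \<integral>\<^sup>+y. G (x, y) \<partial>lborel \<partial>lborel)"
proof -
  have m0: "(\<lambda>p. G (fst p + t * snd p, snd p)) \<in> borel_measurable borel"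
    by (rule meas_T[OF G]) (intro continuous_intros)
  have e0: "(\<lambda>(x,y). G (x + t * y, y)) = (\<lambda>p. G (fst p + t * snd p, snd p))" by auto
  have m1: "(\<lambda>(x,y). G (x + t * y, y)) \<in> borel_measurable (lborel \<Otimes>\<^sub>M lborel)"
    unfolding lborel_prod e0 using m0 by simp
  have e2: "(\<lambda>(x,y). G (x, y)) = G" by auto
  have m2: "(\<lambda>(x,y). G (x, y)) \<in> borel_measurable (lborel \<Otimes>\<^sub>M lborel)"
    unfolding lborel_prod e2 using G by simp
  have "(\<integral>\<^sup>+x. \<integral>\<^sup>+y. G (x + t * y, y) \<partial>lborel \<partial>lborel) = (\<integral>\<^sup>+y. \<integral>\<^sup>+x. G (x + t * y, y) \<partial>lborel \<partial>lborel)"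
    using lborel_pair.Fubini'[OF m1] by simp
  also have "\<dots> = (\<integral>\<^sup>+y. \<integral>\<^sup>+x. G (x, y) \<partial>lborel \<partial>lborel)"
  proof (rule nn_integral_cong)
    fix y :: real
    have m: "(\<lambda>x. G (x, y)) \<in> borel_measurable borel"
      by (rule meas_T[OF G, of "\<lambda>x. (x,y)"]) (intro continuous_intros)
    show "(\<integral>\<^sup>+x. G (x + t * y, y) \<partial>lborel) = (\<integral>\<^sup>+x. G (x, y) \<partial>lborel)"
      using nn_integral_real_affine[OF m, of 1 "t * y"] by (simp add: add.commute)
  qed
  also have "\<dots> = (\<integral>\<^sup>+x. \<integral>\<^sup>+y. G (x, y) \<partial>lborel \<partial>lborel)"
    using lborel_pair.Fubini'[OF m2] by simp
  finally show ?thesis .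
qed

lemma rotation_inv:
  fixes G :: "real \<times> real \<Rightarrow> ennreal"
  assumes G: "G \<in> borel_measurable borel" and cs: "c^2 + sn^2 = 1" and c: "c \<noteq> -1"
  shows "(\<integral>\<^sup>+x. \<integral>\<^sup>+y. G (c * x - sn * y, sn * x + c * y) \<partial>lborel \<partial>lborel) = (\<integral>\<^sup>+x. \<integral>\<^sup>+y. G (x, y) \<partial>lborel \<partial>lborel)"
proof -
  define T where "T = sn / (1 + c)"
  have c1: "1 + c \<noteq> 0" using c by auto
  define G1 where "G1 = (\<lambda>p. G (fst p + (-T) * snd p, snd p))"
  define G2 where "G2 = (\<lambda>p. G1 (fst p, snd p + sn * fst p))"
  have mG1: "G1 \<in> borel_measurable borel" unfolding G1_def by (rule meas_T[OF G]) (intro continuous_intros)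
  have mG2: "G2 \<in> borel_measurable borel" unfolding G2_def by (rule meas_T[OF mG1]) (intro continuous_intros)
  have e: "G (c * x - sn * y, sn * x + c * y) = G2 (x + (-T) * y, y)" for x y
  proof -
    have s2: "sn^2 = 1 - c^2" using cs by simp
    have h1: "x + - T * y + - T * (y + sn * (x + - T * y)) = c * x - sn * y"
    proof -
      have a: "1 - T * sn = c" unfolding T_def using c1 s2 by (simp add: field_simps power2_eq_square; simp add: algebra_simps)
      have ss: "sn * sn = 1 - c * c" using s2 by (simp add: power2_eq_square)
      have b1: "2 - sn * T = 1 + c" unfolding T_def using c1 ss by (simp add: field_simps; simp add: algebra_simps ss)
      have b: "T * (2 - sn * T) = sn" unfolding b1 unfolding T_def using c1 by simp
      have "x + - T * y + - T * (y + sn * (x + - T * y)) = x * (1 - T * sn) - y * (T * (2 - sn * T))" by (simp add: algebra_simps)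
      then show ?thesis using a b by simp
    qed
    have h2: "y + sn * (x + - T * y) = sn * x + c * y"
    proof -
      have a: "1 - T * sn = c" unfolding T_def using c1 s2 by (simp add: field_simps power2_eq_square; simp add: algebra_simps)
      have "y + sn * (x + - T * y) = sn * x + y * (1 - T * sn)" by (simp add: algebra_simps)
      then show ?thesis using a by simp
    qed
    show ?thesis unfolding G2_def G1_def using h1 h2 by simp
  qed
  have "(\<integral>\<^sup>+x. \<integral>\<^sup>+y. G (c * x - sn * y, sn * x + c * y) \<partial>lborel \<partial>lborel) = (\<integral>\<^sup>+x. \<integral>\<^sup>+y. G2 (x + (-T) * y, y) \<partial>lborel \<partial>lborel)"
    unfolding e ..
  also have "\<dots> = (\<integral>\<^sup>+x. \<integral>\<^sup>+y. G2 (x, y) \<partial>lborel \<partial>lborel)" by (rule shearB[OF mG2])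
  also have "\<dots> = (\<integral>\<^sup>+x. \<integral>\<^sup>+y. G1 (x, y + sn * x) \<partial>lborel \<partial>lborel)" unfolding G2_def by simp
  also have "\<dots> = (\<integral>\<^sup>+x. \<integral>\<^sup>+y. G1 (x, y) \<partial>lborel \<partial>lborel)" by (rule shearA[OF mG1])
  also have "\<dots> = (\<integral>\<^sup>+x. \<integral>\<^sup>+y. G (x + (-T) * y, y) \<partial>lborel \<partial>lborel)" unfolding G1_def by simp
  also have "\<dots> = (\<integral>\<^sup>+x. \<integral>\<^sup>+y. G (x, y) \<partial>lborel \<partial>lborel)" by (rule shearB[OF G])
  finally show ?thesis .
qed

lemma emeasure_DD:
  assumes [measurable]: "A \<in> sets borel"
  shows "emeasure (DD \<sigma> a) A = (\<integral>\<^sup>+g. ennreal (normal_density 0 \<sigma> g) * indicator A ((g-a)^2) \<partial>lborel)"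
proof -
  have "emeasure (DD \<sigma> a) A = (\<integral>\<^sup>+t. indicator A t \<partial>DD \<sigma> a)" by simp
  also have "\<dots> = (\<integral>\<^sup>+g. ennreal (normal_density 0 \<sigma> g) * indicator A ((g-a)^2) \<partial>lborel)"
    by (rule nn_DD) measurable
  finally show ?thesis .
qed

lemma normal_density_neg: "normal_density 0 \<sigma> (-g) = normal_density 0 \<sigma> g"
  by (simp add: normal_density_def)

lemma DD_neg: "DD \<sigma> a = DD \<sigma> (-a)"
proof (rule measure_eqI)
  fix A assume "A \<in> sets (DD \<sigma> a)"
  then have A[measurable]: "A \<in> sets borel" by simp
  have m: "(\<lambda>g. ennreal (normal_density 0 \<sigma> g) * indicator A ((g-a)^2)) \<in> borel_measurable borel"
    by measurable
  have "emeasure (DD \<sigma> a) A = (\<integral>\<^sup>+g. ennreal (normal_density 0 \<sigma> g) * indicator A ((g-a)^2) \<partial>lborel)"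
    by (rule emeasure_DD[OF A])
  also have "\<dots> = (\<integral>\<^sup>+g. ennreal (normal_density 0 \<sigma> (0 + -1 * g)) * indicator A ((0 + -1 * g-a)^2) \<partial>lborel)"
    using nn_integral_real_affine[OF m, of "-1" 0] by simp
  also have "\<dots> = (\<integral>\<^sup>+g. ennreal (normal_density 0 \<sigma> g) * indicator A ((g-(-a))^2) \<partial>lborel)"
  proof (rule nn_integral_cong)
    fix g :: real
    have "(0 + -1 * g-a)^2 = (g-(-a))^2" by (simp add: power2_eq_square algebra_simps)
    then show "ennreal (normal_density 0 \<sigma> (0 + -1 * g)) * indicator A ((0 + -1 * g-a)^2) = ennreal (normal_density 0 \<sigma> g) * indicator A ((g-(-a))^2)"
      using normal_density_neg[of \<sigma> g] by simp
  qed
  also have "\<dots> = emeasure (DD \<sigma> (-a)) A" by (rule emeasure_DD[OF A, symmetric])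
  finally show "emeasure (DD \<sigma> a) A = emeasure (DD \<sigma> (-a)) A" .
qed simp

lemma DD_abs: "DD \<sigma> a = DD \<sigma> \<bar>a\<bar>"
  using DD_neg[of \<sigma> a] by (cases "a \<ge> 0") auto

lemma conv2:
  assumes "\<sigma> > 0" and A[measurable]: "A \<in> sets borel"
  shows "emeasure (DD \<sigma> a \<star> DD \<sigma> b) A =
    (\<integral>\<^sup>+x. \<integral>\<^sup>+y. ennreal (normal_density 0 \<sigma> x * normal_density 0 \<sigma> y) * indicator A ((x-a)^2 + (y-b)^2) \<partial>lborel \<partial>lborel)"
proof -
  have "emeasure (DD \<sigma> a \<star> DD \<sigma> b) A = (\<integral>\<^sup>+x. \<integral>\<^sup>+y. indicator A (x + y) \<partial>DD \<sigma> b \<partial>DD \<sigma> a)"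
    using prob_DD[OF assms(1)] by (intro convolution_emeasure') (auto simp: pfin)
  also have "\<dots> = (\<integral>\<^sup>+x. \<integral>\<^sup>+g. ennreal (normal_density 0 \<sigma> g) * indicator A (x + (g-b)^2) \<partial>lborel \<partial>DD \<sigma> a)"
    by (intro nn_integral_cong nn_DD) measurable
  also have "\<dots> = (\<integral>\<^sup>+h. ennreal (normal_density 0 \<sigma> h) * (\<integral>\<^sup>+g. ennreal (normal_density 0 \<sigma> g) * indicator A ((h-a)^2 + (g-b)^2) \<partial>lborel) \<partial>lborel)"
    by (rule nn_DD) measurable
  also have "\<dots> = (\<integral>\<^sup>+x. \<integral>\<^sup>+y. ennreal (normal_density 0 \<sigma> x * normal_density 0 \<sigma> y) * indicator A ((x-a)^2 + (y-b)^2) \<partial>lborel \<partial>lborel)"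
  proof (rule nn_integral_cong)
    fix x :: real
    show "ennreal (normal_density 0 \<sigma> x) * (\<integral>\<^sup>+g. ennreal (normal_density 0 \<sigma> g) * indicator A ((x-a)^2 + (g-b)^2) \<partial>lborel)
      = (\<integral>\<^sup>+y. ennreal (normal_density 0 \<sigma> x * normal_density 0 \<sigma> y) * indicator A ((x-a)^2 + (y-b)^2) \<partial>lborel)"
      by (subst nn_integral_cmult[symmetric]) (auto simp: ennreal_mult mult.assoc intro!: nn_integral_cong)
  qed
  finally show ?thesis .
qed

lemma phi2: "normal_density 0 \<sigma> u * normal_density 0 \<sigma> v = (1 / sqrt (2 * pi * \<sigma>\<^sup>2))^2 * exp (- (u^2 + v^2) / (2 * \<sigma>\<^sup>2))"
  unfolding normal_density_def by (cases "\<sigma> = 0") (simp_all add: power2_eq_square exp_add[symmetric] field_simps)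

lemma DD_rot0:
  assumes "\<sigma> > 0" "a \<ge> 0"
  shows "(DD \<sigma> a \<star> DD \<sigma> b) = (DD \<sigma> (sqrt (a^2 + b^2)) \<star> DD \<sigma> 0)"
proof (cases "a^2 + b^2 = 0")
  case True
  then have "a = 0" "b = 0" by (auto simp: add_nonneg_eq_0_iff)
  then show ?thesis by simp
next
  case False
  define r where "r = sqrt (a^2 + b^2)"
  have "a^2 + b^2 > 0" by (metis False add_nonneg_nonneg zero_le_power2 order_le_less)
  then have r0: "r > 0" unfolding r_def by simp
  have r2: "r^2 = a^2 + b^2" unfolding r_def by simp
  define c where "c = a / r"
  define sn where "sn = - b / r"
  have "c^2 + sn^2 = (a^2 + b^2) / r^2" unfolding c_def sn_def by (simp add: power_divide add_divide_distrib)
  then have cs: "c^2 + sn^2 = 1" using r0 r2 False by auto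
  have c: "c \<noteq> -1" unfolding c_def using r0 assms(2) by (auto simp: field_simps)
  show ?thesis unfolding r_def[symmetric]
  proof (rule measure_eqI)
    fix A assume "A \<in> sets (DD \<sigma> a \<star> DD \<sigma> b)"
    then have A[measurable]: "A \<in> sets borel" by simp
    define G where "G = (\<lambda>p::real\<times>real. ennreal (normal_density 0 \<sigma> (fst p) * normal_density 0 \<sigma> (snd p)) * indicator A ((fst p - r)^2 + (snd p - 0)^2))"
    have mf[measurable]: "(\<lambda>p::real\<times>real. normal_density 0 \<sigma> (fst p) * normal_density 0 \<sigma> (snd p)) \<in> borel_measurable borel"
      unfolding normal_density_def using assms(1) by (intro borel_measurable_continuous_onI continuous_intros) auto
    have mq[measurable]: "(\<lambda>p::real\<times>real. (fst p - r)^2 + (snd p - 0)^2) \<in> borel_measurable borel"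
      by (intro borel_measurable_continuous_onI continuous_intros)
    have mG: "G \<in> borel_measurable borel" unfolding G_def by measurable
    have pt: "G (c * x - sn * y, sn * x + c * y) = ennreal (normal_density 0 \<sigma> x * normal_density 0 \<sigma> y) * indicator A ((x-a)^2 + (y-b)^2)" for x y
    proof -
      have e1: "(c * x - sn * y)^2 + (sn * x + c * y)^2 = x^2 + y^2"
      proof -
        have "(c * x - sn * y)^2 + (sn * x + c * y)^2 = (c^2 + sn^2) * (x^2 + y^2)" by (simp add: power2_eq_square algebra_simps)
        then show ?thesis using cs by simp
      qed
      have e2: "(c * x - sn * y - r)^2 + (sn * x + c * y - 0)^2 = (x-a)^2 + (y-b)^2"
      proof -
        have d: "(c * x - sn * y - r)^2 + (sn * x + c * y - 0)^2 = ((c * x - sn * y)^2 + (sn * x + c * y)^2) - 2 * (r * (c * x - sn * y)) + r^2"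
          by (simp add: power2_eq_square algebra_simps)
        have h: "r * (c * x - sn * y) = a * x + b * y" unfolding c_def sn_def using r0 by (simp add: field_simps)
        show ?thesis unfolding d e1 h r2 by (simp add: power2_eq_square algebra_simps)
      qed
      show ?thesis unfolding G_def using e2 by (simp add: phi2 e1)
    qed
    have "emeasure (DD \<sigma> a \<star> DD \<sigma> b) A = (\<integral>\<^sup>+x. \<integral>\<^sup>+y. G (c * x - sn * y, sn * x + c * y) \<partial>lborel \<partial>lborel)"
      unfolding pt by (rule conv2[OF assms(1) A])
    also have "\<dots> = (\<integral>\<^sup>+x. \<integral>\<^sup>+y. G (x, y) \<partial>lborel \<partial>lborel)" by (rule rotation_inv[OF mG cs c])
    also have "\<dots> = emeasure (DD \<sigma> r \<star> DD \<sigma> 0) A" unfolding G_def by (simp add: conv2[OF assms(1) A])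
    finally show "emeasure (DD \<sigma> a \<star> DD \<sigma> b) A = emeasure (DD \<sigma> r \<star> DD \<sigma> 0) A" .
  qed simp
qed

lemma DD_rot:
  assumes "\<sigma> > 0"
  shows "(DD \<sigma> a \<star> DD \<sigma> b) = (DD \<sigma> (sqrt (a^2 + b^2)) \<star> DD \<sigma> 0)"
  using DD_rot0[OF assms, of "\<bar>a\<bar>" b] DD_abs[of \<sigma> a] by simp

lemma gv: "gauss_vec n y = PiM {0..<n} (\<lambda>i. NN (sqrt y))" unfolding gauss_vec_def NN_def ..

lemma meas_S[measurable]: fixes n :: nat shows "(\<lambda>w. \<Sum>i<n. (w i - s i)^2) \<in> borel_measurable (PiM {0..<n} (\<lambda>i. NN \<sigma>))"
proof (rule borel_measurable_sum)
  fix i assume "i \<in> {..<n}"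
  then have "i \<in> {0..<n}" by simp
  then have "(\<lambda>w. w i) \<in> measurable (PiM {0..<n} (\<lambda>i. NN \<sigma>)) (NN \<sigma>)"
    by (rule measurable_component_singleton)
  then have "(\<lambda>w. w i) \<in> measurable (PiM {0..<n} (\<lambda>i. NN \<sigma>)) borel"
    using measurable_cong_sets[OF refl sets_NN[of \<sigma>], of "PiM {0..<n} (\<lambda>i. NN \<sigma>)"] by simp
  moreover have "(\<lambda>v::real. (v - s i)^2) \<in> borel_measurable borel"
    by (intro borel_measurable_continuous_onI continuous_intros)
  ultimately show "(\<lambda>w. (w i - s i)^2) \<in> borel_measurable (PiM {0..<n} (\<lambda>i. NN \<sigma>))"
    using measurable_compose by blast
qed

lemma split_lemma:
  assumes "\<sigma> > 0"
  shows "distr (PiM {0..<Suc n} (\<lambda>i. NN \<sigma>)) borel (\<lambda>w. \<Sum>i<Suc n. (w i - s i)^2)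
    = (distr (PiM {0..<n} (\<lambda>i. NN \<sigma>)) borel (\<lambda>w. \<Sum>i<n. (w i - s i)^2) \<star> DD \<sigma> (s n))"
proof (rule measure_eqI)
  interpret NNp: prob_space "NN \<sigma>" by (rule prob_NN[OF assms])
  interpret PS: product_sigma_finite "\<lambda>_. NN \<sigma>"
    unfolding product_sigma_finite_def using NNp.sigma_finite_measure by simp
  interpret Pn: prob_space "PiM {0..<n} (\<lambda>i. NN \<sigma>)"
    by (rule prob_space_PiM) (simp add: NNp.prob_space_axioms)
  fix A assume "A \<in> sets (distr (PiM {0..<Suc n} (\<lambda>i. NN \<sigma>)) borel (\<lambda>w. \<Sum>i<Suc n. (w i - s i)^2))"
  then have A[measurable]: "A \<in> sets borel" by simp
  let ?S = "\<lambda>w. \<Sum>i<n. (w i - s i)^2"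
  have e: "(\<Sum>i<Suc n. ((x(n:=g)) i - s i)^2) = ?S x + (g - s n)^2" for x g
    by (simp add: lessThan_Suc)
  have "emeasure (distr (PiM {0..<Suc n} (\<lambda>i. NN \<sigma>)) borel (\<lambda>w. \<Sum>i<Suc n. (w i - s i)^2)) A
     = (\<integral>\<^sup>+t. indicator A t \<partial>distr (PiM {0..<Suc n} (\<lambda>i. NN \<sigma>)) borel (\<lambda>w. \<Sum>i<Suc n. (w i - s i)^2))"
    by simp
  also have "\<dots> = (\<integral>\<^sup>+w. indicator A (\<Sum>i<Suc n. (w i - s i)^2) \<partial>PiM {0..<Suc n} (\<lambda>i. NN \<sigma>))"
    using meas_S[where n="Suc n" and s=s and \<sigma>=\<sigma>] by (subst nn_integral_distr) auto
  also have "\<dots> = (\<integral>\<^sup>+w. indicator A (\<Sum>i<Suc n. (w i - s i)^2) \<partial>PiM (insert n {0..<n}) (\<lambda>i. NN \<sigma>))"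
    by (simp add: atLeast0_lessThan_Suc)
  also have "\<dots> = (\<integral>\<^sup>+x. \<integral>\<^sup>+g. indicator A (\<Sum>i<Suc n. ((x(n:=g)) i - s i)^2) \<partial>NN \<sigma> \<partial>PiM {0..<n} (\<lambda>i. NN \<sigma>))"
  proof (rule PS.product_nn_integral_insert)
    have "(\<lambda>w. \<Sum>i<Suc n. (w i - s i)^2) \<in> borel_measurable (PiM {0..<Suc n} (\<lambda>i. NN \<sigma>))" by (rule meas_S)
    then show "(\<lambda>w. indicator A (\<Sum>i<Suc n. (w i - s i)^2)) \<in> borel_measurable (PiM (insert n {0..<n}) (\<lambda>i. NN \<sigma>))"
      by (simp add: atLeast0_lessThan_Suc)
  qed auto
  also have "\<dots> = (\<integral>\<^sup>+x. \<integral>\<^sup>+g. indicator A (?S x + (g - s n)^2) \<partial>NN \<sigma> \<partial>PiM {0..<n} (\<lambda>i. NN \<sigma>))"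
    unfolding e ..
  also have "\<dots> = (\<integral>\<^sup>+x. \<integral>\<^sup>+r. indicator A (?S x + r) \<partial>DD \<sigma> (s n) \<partial>PiM {0..<n} (\<lambda>i. NN \<sigma>))"
  proof (intro nn_integral_cong)
    fix x
    show "(\<integral>\<^sup>+g. indicator A (?S x + (g - s n)^2) \<partial>NN \<sigma>) = (\<integral>\<^sup>+r. indicator A (?S x + r) \<partial>DD \<sigma> (s n))"
      unfolding DD_def by (subst nn_integral_distr) auto
  qed
  also have "\<dots> = (\<integral>\<^sup>+t. \<integral>\<^sup>+r. indicator A (t + r) \<partial>DD \<sigma> (s n) \<partial>distr (PiM {0..<n} (\<lambda>i. NN \<sigma>)) borel ?S)"
  proof -
    interpret D: prob_space "DD \<sigma> (s n)" by (rule prob_DD[OF assms])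
    have "(\<lambda>t. \<integral>\<^sup>+r. indicator A (t + r) \<partial>DD \<sigma> (s n)) \<in> borel_measurable borel" by measurable
    then show ?thesis by (subst nn_integral_distr) auto
  qed
  also have "\<dots> = emeasure (distr (PiM {0..<n} (\<lambda>i. NN \<sigma>)) borel ?S \<star> DD \<sigma> (s n)) A"
  proof -
    have f1: "finite_measure (distr (PiM {0..<n} (\<lambda>i. NN \<sigma>)) borel ?S)"
      by (rule pfin[OF Pn.prob_space_distr[OF meas_S]])
    have f2: "finite_measure (DD \<sigma> (s n))" by (rule pfin[OF prob_DD[OF assms]])
    show ?thesis by (rule convolution_emeasure'[symmetric, OF A f1 f2]) simp_all
  qed
  finally show "emeasure (distr (PiM {0..<Suc n} (\<lambda>i. NN \<sigma>)) borel (\<lambda>w. \<Sum>i<Suc n. (w i - s i)^2)) A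
     = emeasure (distr (PiM {0..<n} (\<lambda>i. NN \<sigma>)) borel ?S \<star> DD \<sigma> (s n)) A" .
qed simp

lemma fDD: "\<sigma> > 0 \<Longrightarrow> finite_measure (DD \<sigma> a)" by (rule pfin[OF prob_DD])
lemma fChi: "\<sigma> > 0 \<Longrightarrow> finite_measure (Chi \<sigma> k)" by (rule pfin[OF prob_Chi])

lemma reduce:
  assumes "\<sigma> > 0"
  shows "distr (PiM {0..<Suc n} (\<lambda>i. NN \<sigma>)) borel (\<lambda>w. \<Sum>i<Suc n. (w i - s i)^2)
    = (DD \<sigma> (sqrt (\<Sum>i<Suc n. (s i)^2)) \<star> Chi \<sigma> n)"
proof (induction n)
  case 0
  interpret NNp: prob_space "NN \<sigma>" by (rule prob_NN[OF assms])
  interpret P0: prob_space "PiM {0..<0} (\<lambda>i. NN \<sigma>)"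
    by (rule prob_space_PiM) (simp add: NNp.prob_space_axioms)
  have "distr (PiM {0..<0} (\<lambda>i. NN \<sigma>)) borel (\<lambda>w. \<Sum>i<0. (w i - s i)^2) = return borel 0"
  proof -
    have "distr (PiM {0..<0} (\<lambda>i. NN \<sigma>)) borel (\<lambda>w::nat\<Rightarrow>real. 0::real) = return borel 0"
      by (rule P0.distr_const) simp
    then show ?thesis by simp
  qed
  then have "distr (PiM {0..<Suc 0} (\<lambda>i. NN \<sigma>)) borel (\<lambda>w. \<Sum>i<Suc 0. (w i - s i)^2) = (return borel 0 \<star> DD \<sigma> (s 0))"
    using split_lemma[OF assms, of 0 s] by simp
  also have "\<dots> = (DD \<sigma> (s 0) \<star> return borel 0)"
    by (rule convolution_commutative) (auto intro!: pfin prob_space_return fDD assms)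
  also have "\<dots> = (DD \<sigma> (sqrt (\<Sum>i<Suc 0. (s i)^2)) \<star> Chi \<sigma> 0)"
    using DD_abs[of \<sigma> "s 0"] by simp
  finally show ?case .
next
  case (Suc n)
  define r where "r = sqrt (\<Sum>i<Suc n. (s i)^2)"
  have r2: "r^2 = (\<Sum>i<Suc n. (s i)^2)" unfolding r_def by (simp add: sum_nonneg)
  note f = fDD[OF assms] fChi[OF assms]
  have "distr (PiM {0..<Suc (Suc n)} (\<lambda>i. NN \<sigma>)) borel (\<lambda>w. \<Sum>i<Suc (Suc n). (w i - s i)^2)
      = ((DD \<sigma> r \<star> Chi \<sigma> n) \<star> DD \<sigma> (s (Suc n)))"
    using split_lemma[OF assms, of "Suc n" s] Suc.IH unfolding r_def by simp
  also have "\<dots> = (DD \<sigma> r \<star> (Chi \<sigma> n \<star> DD \<sigma> (s (Suc n))))"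
    by (rule convolution_associative[symmetric]) (simp_all add: f)
  also have "(Chi \<sigma> n \<star> DD \<sigma> (s (Suc n))) = (DD \<sigma> (s (Suc n)) \<star> Chi \<sigma> n)"
    by (rule convolution_commutative) (simp_all add: f)
  also have "(DD \<sigma> r \<star> (DD \<sigma> (s (Suc n)) \<star> Chi \<sigma> n)) = ((DD \<sigma> r \<star> DD \<sigma> (s (Suc n))) \<star> Chi \<sigma> n)"
    by (rule convolution_associative) (simp_all add: f)
  also have "(DD \<sigma> r \<star> DD \<sigma> (s (Suc n))) = (DD \<sigma> (sqrt (r^2 + (s (Suc n))^2)) \<star> DD \<sigma> 0)"
    by (rule DD_rot[OF assms])
  also have "((DD \<sigma> (sqrt (r^2 + (s (Suc n))^2)) \<star> DD \<sigma> 0) \<star> Chi \<sigma> n) = (DD \<sigma> (sqrt (r^2 + (s (Suc n))^2)) \<star> (DD \<sigma> 0 \<star> Chi \<sigma> n))"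
    by (rule convolution_associative[symmetric]) (simp_all add: f)
  also have "(DD \<sigma> 0 \<star> Chi \<sigma> n) = Chi \<sigma> (Suc n)"
    by (simp, rule convolution_commutative) (simp_all add: f)
  also have "r^2 + (s (Suc n))^2 = (\<Sum>i<Suc (Suc n). (s i)^2)" unfolding r2 by simp
  finally show ?case .
qed

lemma chernoff:
  assumes "\<sigma> > 0" "1 + 2 * l * \<sigma>^2 > 0" and B[measurable]: "B \<in> sets borel"
    and Br: "\<And>r. r \<in> B \<Longrightarrow> l * r \<le> l * r0"
  shows "emeasure (Chi \<sigma> k) B \<le> ennreal ((1 / sqrt (1 + 2 * l * \<sigma>^2))^k * exp (l * r0))"
proof -
  define u where "u = 1 + 2 * l * \<sigma>^2"
  have u: "u > 0" using assms unfolding u_def by simp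
  define c where "c = (1 / sqrt u)^k"
  have c: "c \<ge> 0" unfolding c_def using u by simp
  have pos: "\<sigma> / sqrt u > 0" using u assms by simp
  have t: "tilt (Chi \<sigma> k) (Chi (\<sigma> / sqrt u) k) c l"
    using tilt_Chi[OF assms(1,2), of k] unfolding u_def c_def .
  interpret C2: prob_space "Chi (\<sigma> / sqrt u) k" by (rule prob_Chi[OF pos])
  define F where "F = (\<lambda>r. ennreal (exp (-l * r)) * indicator B r)"
  have mF: "F \<in> borel_measurable borel" unfolding F_def by measurable
  have "(\<integral>\<^sup>+r. F r \<partial>Chi \<sigma> k) = (\<integral>\<^sup>+r. ennreal (c * exp (l * r)) * F r \<partial>Chi (\<sigma> / sqrt u) k)"
    using t mF unfolding tilt_def by blast
  also have "\<dots> = (\<integral>\<^sup>+r. ennreal c * indicator B r \<partial>Chi (\<sigma> / sqrt u) k)"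
  proof (rule nn_integral_cong)
    fix r
    have "ennreal (c * exp (l * r)) * ennreal (exp (-l * r)) = ennreal c"
      using c by (simp add: ennreal_mult[symmetric] mult.assoc exp_minus[symmetric] exp_add[symmetric])
    then show "ennreal (c * exp (l * r)) * F r = ennreal c * indicator B r"
      unfolding F_def by (simp add: mult.assoc[symmetric])
  qed
  also have "\<dots> = ennreal c * emeasure (Chi (\<sigma> / sqrt u) k) B"
    by (subst nn_integral_cmult_indicator) auto
  also have "\<dots> \<le> ennreal c * 1"
    by (intro mult_left_mono) (auto simp: C2.emeasure_le_1)
  finally have up: "(\<integral>\<^sup>+r. F r \<partial>Chi \<sigma> k) \<le> ennreal c" by simp
  have "ennreal (exp (-l * r0)) * emeasure (Chi \<sigma> k) B = (\<integral>\<^sup>+r. ennreal (exp (-l * r0)) * indicator B r \<partial>Chi \<sigma> k)"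
    by (subst nn_integral_cmult_indicator) auto
  also have "\<dots> \<le> (\<integral>\<^sup>+r. F r \<partial>Chi \<sigma> k)"
    unfolding F_def
  proof (rule nn_integral_mono)
    fix r
    show "ennreal (exp (-l * r0)) * indicator B r \<le> ennreal (exp (-l * r)) * indicator B r"
      using Br[of r] by (cases "r \<in> B") auto
  qed
  finally have "ennreal (exp (-l * r0)) * emeasure (Chi \<sigma> k) B \<le> ennreal c" using up by simp
  then have "ennreal (exp (l * r0)) * (ennreal (exp (-l * r0)) * emeasure (Chi \<sigma> k) B) \<le> ennreal (exp (l * r0)) * ennreal c"
    by (rule mult_left_mono) simp
  moreover have "ennreal (exp (l * r0)) * ennreal (exp (-l * r0)) = 1"
    by (simp add: ennreal_mult[symmetric] exp_minus[symmetric] exp_add[symmetric])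
  ultimately have "emeasure (Chi \<sigma> k) B \<le> ennreal (exp (l * r0)) * ennreal c"
    by (simp add: mult.assoc[symmetric])
  also have "\<dots> = ennreal (c * exp (l * r0))" using c by (simp add: ennreal_mult[symmetric] mult.commute)
  finally show ?thesis unfolding c_def u_def .
qed

lemma exp2: "exp (-2::real) \<le> 1/4"
proof -
  have "exp (1::real) \<ge> 2" using exp_ge_add_one_self[of 1] by simp
  then have "exp (1::real) * exp 1 \<ge> 2 * 2" by (intro mult_mono) auto
  then have "exp (2::real) \<ge> 4" by (simp add: exp_add[symmetric])
  then show ?thesis by (simp add: exp_minus field_simps)
qed

lemma concentration:
  assumes "\<sigma> > 0" "k \<ge> 4"
  shows "measure (Chi \<sigma> k) {real k * \<sigma>^2 - 6 * \<sigma>^2 * sqrt k .. real k * \<sigma>^2 + 6 * \<sigma>^2 * sqrt k} \<ge> 1/2"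
proof -
  define v where "v = \<sigma>^2"
  have v: "v > 0" unfolding v_def using assms by simp
  define sk where "sk = sqrt (real k)"
  have sk2: "sk^2 = real k" unfolding sk_def by simp
  have sk: "sk \<ge> 2" unfolding sk_def using assms(2) real_sqrt_le_mono[of 4 "real k"] by simp
  define p where "p = 1 / sk"
  have p0: "p > 0" and p2: "p \<le> 1/2" unfolding p_def using sk by auto
  have kk: "real k = sk * sk" using sk2 by (simp add: power2_eq_square)
  have kp: "real k * p = sk" unfolding p_def kk using sk by simp
  have kp2: "real k * p^2 = 1" unfolding p_def kk using sk by (simp add: power2_eq_square)
  have psk: "p * sk = 1" unfolding p_def using sk by simp
  define mu where "mu = p / (2 * v)"
  define d where "d = 6 * v * sk"
  have mu0: "mu > 0" unfolding mu_def using p0 v by simp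
  interpret C: prob_space "Chi \<sigma> k" by (rule prob_Chi[OF assms(1)])
  define U where "U = {real k * v + d <..}"
  define L where "L = {..< real k * v - d}"
  have eU: "emeasure (Chi \<sigma> k) U \<le> ennreal ((1 / sqrt (1 + 2 * (-mu) * \<sigma>^2))^k * exp ((-mu) * (real k * v + d)))"
  proof (rule chernoff[OF assms(1)])
    show "1 + 2 * (-mu) * \<sigma>^2 > 0" unfolding mu_def v_def using assms(1) p2 by simp
    show "U \<in> sets borel" unfolding U_def by simp
    fix r assume "r \<in> U"
    then have "real k * v + d \<le> r" unfolding U_def by simp
    then have "mu * (real k * v + d) \<le> mu * r" using mu0 by (intro mult_left_mono) auto
    then show "(-mu) * r \<le> (-mu) * (real k * v + d)" by simp
  qed
  have rU: "(1 / sqrt (1 + 2 * (-mu) * \<sigma>^2))^k * exp ((-mu) * (real k * v + d)) \<le> exp (-2)"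
  proof -
    have e1: "1 + 2 * (-mu) * \<sigma>^2 = 1 - p" unfolding mu_def v_def using assms by simp
    have l: "- p - 2 * p^2 \<le> ln (1 - p)" by (rule ln_one_minus_pos_lower_bound) (use p0 p2 in auto)
    have "1 / sqrt (1 - p) = exp (- ln (1 - p) / 2)"
      using p2 by (simp add: sqrt_def exp_minus ln_sqrt[symmetric] inverse_eq_divide)
    then have "(1 / sqrt (1 - p))^k = exp (real k * (- ln (1 - p) / 2))"
      by (simp only: exp_of_nat_mult[symmetric])
    also have "\<dots> \<le> exp (real k * ((p + 2 * p^2) / 2))"
      using l by (intro exp_mono mult_left_mono) auto
    finally have a: "(1 / sqrt (1 - p))^k \<le> exp (sk/2 + 1)"
      using kp kp2 by (simp add: algebra_simps add_divide_distrib)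
    have "(-mu) * (real k * v + d) = - ((real k * p)/2 + 3 * (p * sk))"
      unfolding mu_def d_def using v by (simp add: field_simps)
    then have b: "(-mu) * (real k * v + d) = - (sk/2 + 3)" unfolding kp psk by simp
    have "(1 / sqrt (1 + 2 * (-mu) * \<sigma>^2))^k * exp ((-mu) * (real k * v + d)) \<le> exp (sk/2 + 1) * exp (- (sk/2 + 3))"
      unfolding e1 b by (rule mult_right_mono[OF a]) simp
    also have "\<dots> = exp (-2)" by (simp add: exp_add[symmetric])
    finally show ?thesis .
  qed
  have "emeasure (Chi \<sigma> k) U \<le> ennreal (exp (-2))" using eU ennreal_leI[OF rU] by (rule order_trans)
  then have hU: "measure (Chi \<sigma> k) U \<le> exp (-2)"
    by (simp add: C.emeasure_eq_measure)
  have eL: "emeasure (Chi \<sigma> k) L \<le> ennreal ((1 / sqrt (1 + 2 * mu * \<sigma>^2))^k * exp (mu * (real k * v - d)))"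
  proof (rule chernoff[OF assms(1)])
    show "1 + 2 * mu * \<sigma>^2 > 0" unfolding mu_def v_def using assms(1) p0 by simp
    show "L \<in> sets borel" unfolding L_def by simp
    fix r assume "r \<in> L"
    then have "r \<le> real k * v - d" unfolding L_def by simp
    then show "mu * r \<le> mu * (real k * v - d)" using mu0 by (intro mult_left_mono) auto
  qed
  have rL: "(1 / sqrt (1 + 2 * mu * \<sigma>^2))^k * exp (mu * (real k * v - d)) \<le> exp (-2)"
  proof -
    have e1: "1 + 2 * mu * \<sigma>^2 = 1 + p" unfolding mu_def v_def using assms by simp
    have l: "p - p^2 \<le> ln (1 + p)" by (rule ln_one_plus_pos_lower_bound) (use p0 p2 in auto)
    have "1 / sqrt (1 + p) = exp (- ln (1 + p) / 2)"
      using p0 by (simp add: sqrt_def exp_minus ln_sqrt[symmetric] inverse_eq_divide)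
    then have "(1 / sqrt (1 + p))^k = exp (real k * (- ln (1 + p) / 2))"
      by (simp only: exp_of_nat_mult[symmetric])
    also have "\<dots> \<le> exp (real k * (- (p - p^2) / 2))"
      using l by (intro exp_mono mult_left_mono) auto
    finally have a: "(1 / sqrt (1 + p))^k \<le> exp (- sk/2 + 1/2)"
      using kp kp2 by (simp add: algebra_simps diff_divide_distrib)
    have "mu * (real k * v - d) = (real k * p)/2 - 3 * (p * sk)"
      unfolding mu_def d_def using v by (simp add: field_simps)
    then have b: "mu * (real k * v - d) = sk/2 - 3" unfolding kp psk by simp
    have "(1 / sqrt (1 + 2 * mu * \<sigma>^2))^k * exp (mu * (real k * v - d)) \<le> exp (- sk/2 + 1/2) * exp (sk/2 - 3)"
      unfolding e1 b by (rule mult_right_mono[OF a]) simp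
    also have "\<dots> = exp (-5/2)" by (simp add: exp_add[symmetric])
    also have "\<dots> \<le> exp (-2)" by simp
    finally show ?thesis .
  qed
  have "emeasure (Chi \<sigma> k) L \<le> ennreal (exp (-2))" using eL ennreal_leI[OF rL] by (rule order_trans)
  then have hL: "measure (Chi \<sigma> k) L \<le> exp (-2)"
    by (simp add: C.emeasure_eq_measure)
  define J where "J = {real k * v - d .. real k * v + d}"
  have "UNIV - J = U \<union> L" unfolding J_def U_def L_def by auto
  then have "measure (Chi \<sigma> k) (UNIV - J) \<le> measure (Chi \<sigma> k) U + measure (Chi \<sigma> k) L"
    by (simp add: measure_Un_le U_def L_def)
  moreover have "measure (Chi \<sigma> k) (UNIV - J) = 1 - measure (Chi \<sigma> k) J"
    using C.prob_compl[of J] by (simp add: J_def)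
  ultimately have "measure (Chi \<sigma> k) J \<ge> 1 - 2 * exp (-2)" using hU hL by simp
  moreover have "1 - 2 * exp (-2::real) \<ge> 1/2" using exp2 by simp
  ultimately show ?thesis unfolding J_def d_def v_def sk_def by (simp add: mult_ac)
qed

lemma sqrt_dev:
  assumes "W \<ge> 0" "b > 0"
  shows "\<bar>sqrt W - b\<bar> \<le> \<bar>W - b^2\<bar> / b"
proof -
  have e: "(sqrt W - b) * (sqrt W + b) = W - b^2" using assms by (simp add: algebra_simps power2_eq_square)
  have p: "sqrt W + b \<ge> b" using assms by simp
  have "\<bar>sqrt W - b\<bar> * b \<le> \<bar>sqrt W - b\<bar> * (sqrt W + b)" using p by (intro mult_left_mono) auto
  also have "\<dots> = \<bar>(sqrt W - b) * (sqrt W + b)\<bar>" using assms by (simp add: abs_mult)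
  also have "\<dots> = \<bar>W - b^2\<bar>" unfolding e ..
  finally show ?thesis using assms by (simp add: field_simps)
qed

lemma nd_mono:
  assumes "\<tau> > 0" "\<bar>g\<bar> \<le> M0"
  shows "normal_density 0 \<tau> g \<ge> normal_density 0 \<tau> M0"
proof -
  have "g^2 \<le> M0^2" using assms(2) by (metis abs_le_square_iff abs_of_nonneg abs_ge_zero order_trans)
  then have "- ((M0 - 0)^2) / (2 * \<tau>^2) \<le> - ((g - 0)^2) / (2 * \<tau>^2)" using assms(1) by (simp add: divide_right_mono)
  then show ?thesis unfolding normal_density_def by (intro mult_left_mono) auto
qed

lemma point_est:
  assumes tau: "\<tau> > 0" and b: "b > 0" and T1: "T \<ge> 1"
    and Tb: "\<bar>T - b^2\<bar> \<le> D" and Tup: "T \<le> K" and A[measurable]: "A \<in> sets borel"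
    and sub: "\<And>a. a \<in> {T - 1 .. T} \<Longrightarrow> a \<in> A"
  shows "emeasure (DD \<tau> b) A \<ge> ennreal (normal_density 0 \<tau> ((1 + D) / b) / (2 * sqrt K))"
proof -
  define M0 where "M0 = (1 + D) / b"
  define lo where "lo = b - sqrt T"
  define hi where "hi = b - sqrt (T - 1)"
  have D0: "D \<ge> 0" using Tb by simp
  have d1: "\<bar>sqrt T - b\<bar> \<le> M0"
  proof -
    have "\<bar>sqrt T - b\<bar> \<le> \<bar>T - b^2\<bar> / b" by (rule sqrt_dev) (use T1 b in auto)
    also have "\<dots> \<le> (1 + D) / b" using Tb b by (intro divide_right_mono) auto
    finally show ?thesis unfolding M0_def .
  qed
  have d2: "\<bar>sqrt (T - 1) - b\<bar> \<le> M0"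
  proof -
    have "\<bar>sqrt (T - 1) - b\<bar> \<le> \<bar>(T - 1) - b^2\<bar> / b" by (rule sqrt_dev) (use T1 b in auto)
    also have "\<dots> \<le> (1 + D) / b" using Tb b by (intro divide_right_mono) auto
    finally show ?thesis unfolding M0_def .
  qed
  have sub2: "{lo..hi} \<subseteq> (\<lambda>g. (g - b)^2) -` A"
  proof
    fix g assume g: "g \<in> {lo..hi}"
    then have g1: "sqrt (T - 1) \<le> b - g" and g2: "b - g \<le> sqrt T" unfolding lo_def hi_def by auto
    have h1: "0 \<le> sqrt (T - 1)" using T1 by simp
    have q1: "(sqrt (T - 1))^2 \<le> (b - g)^2" using power_mono[OF g1 h1, of 2] .
    have q2: "(b - g)^2 \<le> (sqrt T)^2" using power_mono[OF g2, of 2] g1 h1 by simp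
    from q1 q2 have "(g - b)^2 \<in> {T - 1 .. T}" using T1 by (simp add: power2_commute)
    then show "g \<in> (\<lambda>g. (g - b)^2) -` A" using sub by simp
  qed
  have len: "hi - lo \<ge> 1 / (2 * sqrt K)"
  proof -
    have e: "(sqrt T - sqrt (T - 1)) * (sqrt T + sqrt (T - 1)) = 1"
      using T1 by (simp add: algebra_simps)
    have s1: "sqrt T + sqrt (T - 1) \<le> 2 * sqrt K"
    proof -
      have a1: "sqrt (T - 1) \<le> sqrt T" by simp
      have a2: "sqrt T \<le> sqrt K" using Tup by simp
      show ?thesis using a1 a2 by linarith
    qed
    have s0: "sqrt T + sqrt (T - 1) > 0" using T1 by (simp add: add_pos_nonneg)
    have "hi - lo = 1 / (sqrt T + sqrt (T - 1))" unfolding hi_def lo_def using e s0 by (simp add: field_simps)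
    also have "\<dots> \<ge> 1 / (2 * sqrt K)"
    proof -
      have K0: "sqrt K > 0" using T1 Tup by simp
      show ?thesis using s0 s1 K0 by (intro divide_left_mono) auto
    qed
    finally show ?thesis .
  qed
  have lohi: "lo \<le> hi" unfolding lo_def hi_def by simp
  have mf: "(\<lambda>g::real. (g - b)^2) \<in> borel_measurable borel" by (intro borel_measurable_continuous_onI continuous_intros)
  have pm: "(\<lambda>g::real. (g - b)^2) -` A \<in> sets borel" using measurable_sets[OF mf A] by simp
  have "ennreal (normal_density 0 \<tau> M0 / (2 * sqrt K)) = ennreal (normal_density 0 \<tau> M0) * ennreal (1 / (2 * sqrt K))"
  proof -
    have nn: "0 \<le> 1 / (2 * sqrt K)" using T1 Tup by simp
    show ?thesis by (simp add: ennreal_mult[OF normal_density_nonneg nn, symmetric])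
  qed
  also have "\<dots> \<le> ennreal (normal_density 0 \<tau> M0) * ennreal (hi - lo)"
    using len by (intro mult_left_mono ennreal_leI) auto
  also have "\<dots> = (\<integral>\<^sup>+g. ennreal (normal_density 0 \<tau> M0) * indicator {lo..hi} g \<partial>lborel)"
    using lohi by (subst nn_integral_cmult_indicator) auto
  also have "\<dots> \<le> (\<integral>\<^sup>+g. ennreal (normal_density 0 \<tau> g) * indicator {lo..hi} g \<partial>lborel)"
  proof (rule nn_integral_mono)
    fix g
    show "ennreal (normal_density 0 \<tau> M0) * indicator {lo..hi} g \<le> ennreal (normal_density 0 \<tau> g) * indicator {lo..hi} g"
    proof (cases "g \<in> {lo..hi}")
      case True
      then have "\<bar>g\<bar> \<le> M0" using d1 d2 unfolding lo_def hi_def by auto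
      then show ?thesis using True nd_mono[OF tau] by auto
    qed auto
  qed
  also have "\<dots> = emeasure (NN \<tau>) {lo..hi}"
    unfolding NN_def by (subst emeasure_density) auto
  also have "\<dots> \<le> emeasure (NN \<tau>) ((\<lambda>g. (g - b)^2) -` A)"
    using pm by (intro emeasure_mono sub2) auto
  also have "\<dots> = emeasure (DD \<tau> b) A"
    unfolding DD_def by (subst emeasure_distr) auto
  finally show ?thesis unfolding M0_def by simp
qed

lemma local_est:
  assumes tau: "\<tau> > 0" and b: "b > 0" and k: "k \<ge> 4"
    and t0: "t0 = b^2 + (real k + 1) * \<tau>^2"
    and H1: "b^2 + \<tau>^2 - 6 * \<tau>^2 * sqrt k \<ge> 1"
  shows "emeasure (DD \<tau> b \<star> Chi \<tau> k) {t0 - 1 .. t0} \<ge>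
    ennreal (normal_density 0 \<tau> ((1 + (\<tau>^2 + 6 * \<tau>^2 * sqrt k)) / b) / (2 * sqrt (b^2 + (\<tau>^2 + 6 * \<tau>^2 * sqrt k))) * (1/2))"
proof -
  define D where "D = \<tau>^2 + 6 * \<tau>^2 * sqrt k"
  define K where "K = b^2 + D"
  define q where "q = normal_density 0 \<tau> ((1 + D) / b) / (2 * sqrt K)"
  define J where "J = {real k * \<tau>^2 - 6 * \<tau>^2 * sqrt k .. real k * \<tau>^2 + 6 * \<tau>^2 * sqrt k}"
  define A where "A = {t0 - 1 .. t0}"
  have q0: "q \<ge> 0" unfolding q_def K_def D_def by simp
  interpret C: prob_space "Chi \<tau> k" by (rule prob_Chi[OF tau])
  have comm: "(DD \<tau> b \<star> Chi \<tau> k) = (Chi \<tau> k \<star> DD \<tau> b)"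
    by (rule convolution_commutative) (simp_all add: fDD[OF tau] fChi[OF tau])
  have "ennreal (q * (1/2)) = ennreal q * ennreal (1/2)" by (rule ennreal_mult[OF q0]) simp
  also have "\<dots> \<le> ennreal q * emeasure (Chi \<tau> k) J"
  proof (intro mult_left_mono)
    show "ennreal (1/2) \<le> emeasure (Chi \<tau> k) J"
    proof -
      have "1/2 \<le> measure (Chi \<tau> k) J" using concentration[OF tau k] unfolding J_def .
      then have "ennreal (1/2) \<le> ennreal (measure (Chi \<tau> k) J)" by (rule ennreal_leI)
      then show ?thesis unfolding C.emeasure_eq_measure .
    qed
  qed simp
  also have "\<dots> = (\<integral>\<^sup>+r. ennreal q * indicator J r \<partial>Chi \<tau> k)"
    by (subst nn_integral_cmult_indicator) (auto simp: J_def)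
  also have "\<dots> \<le> (\<integral>\<^sup>+r. emeasure (DD \<tau> b) {a. a + r \<in> A} \<partial>Chi \<tau> k)"
  proof (rule nn_integral_mono)
    fix r
    show "ennreal q * indicator J r \<le> emeasure (DD \<tau> b) {a. a + r \<in> A}"
    proof (cases "r \<in> J")
      case True
      define T where "T = t0 - r"
      have r1: "real k * \<tau>^2 - 6 * \<tau>^2 * sqrt k \<le> r" and r2: "r \<le> real k * \<tau>^2 + 6 * \<tau>^2 * sqrt k"
        using True unfolding J_def by auto
      have T1: "T \<ge> 1" unfolding T_def t0 using r2 H1 by (simp add: algebra_simps)
      have tt: "\<tau>^2 \<ge> 0" by simp
      have e: "T - b^2 = (real k * \<tau>^2 + \<tau>^2) - r" unfolding T_def t0 by (simp add: algebra_simps)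
      have Tb: "\<bar>T - b^2\<bar> \<le> D" unfolding e D_def abs_le_iff using r1 r2 tt by linarith
      have Tup: "T \<le> K" using Tb unfolding K_def by simp
      have Am: "{a. a + r \<in> A} \<in> sets borel"
      proof -
        have mf: "(\<lambda>a::real. a + r) \<in> borel_measurable borel" by (intro borel_measurable_continuous_onI continuous_intros)
        have "(\<lambda>a::real. a + r) -` A \<in> sets borel" using measurable_sets[OF mf, of A] by (simp add: A_def)
        then show ?thesis by (simp add: vimage_def)
      qed
      have "ennreal q \<le> emeasure (DD \<tau> b) {a. a + r \<in> A}"
        unfolding q_def
        by (rule point_est[OF tau b T1 Tb Tup Am]) (auto simp: A_def T_def)
      then show ?thesis using True by simp
    qed simp
  qed
  also have "\<dots> = emeasure (Chi \<tau> k \<star> DD \<tau> b) A"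
    by (rule convolution_emeasure[symmetric]) (auto simp: A_def fDD[OF tau] fChi[OF tau])
  finally show ?thesis unfolding comm A_def q_def K_def D_def by simp
qed

lemma params:
  fixes x y z :: real
  assumes x: "x > 0" and y: "y > 0" and z: "z > 0" and zxy: "z \<le> x + y"
  defines "u \<equiv> 2 * x / cA x y z"
  defines "lam \<equiv> (u - 1) / (2 * y)"
  shows "cA x y z > 0" "u \<ge> 1" "lam \<ge> 0" "1 + 2 * lam * y = u" "z = x / u^2 + y / u"
    "rate_f x y z = lam * x / u + ln u / 2 - lam * z"
proof -
  define A where "A = cA x y z"
  define Dq where "Dq = y^2 + 4 * x * z"
  have Dq: "Dq > y^2" unfolding Dq_def using x z by simp
  have A_def': "A = sqrt Dq - y" unfolding A_def Dq_def cA_def by simp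
  have sD: "sqrt Dq > y" using real_less_rsqrt[OF Dq] .
  show A0: "cA x y z > 0" using sD A_def' A_def by simp
  have A0': "A > 0" using A0 A_def by simp
  have "4 * x * z \<le> 4 * x * (x + y)" using x zxy by (intro mult_left_mono) auto
  then have "Dq \<le> (2 * x + y)^2" unfolding Dq_def by (simp add: power2_eq_square algebra_simps)
  then have "sqrt Dq \<le> 2 * x + y" using x y by (intro real_le_lsqrt) auto
  then have A2x: "A \<le> 2 * x" unfolding A_def' by simp
  have "Dq \<ge> 0" unfolding Dq_def using x z by simp
  then have sq: "(sqrt Dq)^2 = Dq" by simp
  have Aeq: "A^2 + 2 * y * A = 4 * x * z" unfolding A_def'
  proof -
    have "(sqrt Dq - y)^2 + 2 * y * (sqrt Dq - y) = (sqrt Dq)^2 - y^2" by (simp add: power2_eq_square algebra_simps)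
    then show "(sqrt Dq - y)^2 + 2 * y * (sqrt Dq - y) = 4 * x * z" unfolding sq by (simp add: Dq_def)
  qed
  have u_def': "u = 2 * x / A" unfolding u_def A_def ..
  have u0: "u > 0" unfolding u_def' using x A0' by simp
  show u1: "u \<ge> 1" unfolding u_def' using A2x A0' by simp
  show "lam \<ge> 0" unfolding lam_def using u1 y by simp
  show "1 + 2 * lam * y = u" unfolding lam_def using y by (simp add: field_simps)
  have Au: "A = 2 * x / u" unfolding u_def' using A0' x by simp
  show zid: "z = x / u^2 + y / u"
  proof -
    have "4 * x^2 / u^2 + 4 * x * y / u = 4 * x * z" using Aeq unfolding Au by (simp add: power_divide algebra_simps power2_eq_square)
    then have "4 * x * (x / u^2 + y / u) = 4 * x * z" by (simp add: algebra_simps power2_eq_square)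
    then show ?thesis using x by simp
  qed
  have lnA: "ln (A / (2 * x)) = - ln u" unfolding Au using x u0 by (simp add: ln_div)
  show "rate_f x y z = lam * x / u + ln u / 2 - lam * z"
    unfolding rate_f_def A_def[symmetric] lam_def using zxy lnA
    apply (simp add: Au)
    using x y u0 by (simp add: field_simps)
qed

lemma rate_zero:
  assumes x: "x > 0" and y: "y > 0"
  shows "rate_f x y (x + y) = 0"
proof -
  have "y^2 + 4 * x * (x + y) = (2 * x + y)^2" by (simp add: power2_eq_square algebra_simps)
  then have A: "cA x y (x + y) = 2 * x" unfolding cA_def using x y by simp
  show ?thesis unfolding rate_f_def A using x y by (simp add: field_simps)
qed

lemma tilt_bounds:
  assumes L': "prob_space L'" "sets L' = sets borel" and L: "sets L = sets borel"
    and t: "tilt L L' C lam" and C: "C \<ge> 0" and lam: "lam \<ge> 0"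
  shows "emeasure L {..t0} \<le> ennreal (C * exp (lam * t0))"
    "ennreal (C * exp (lam * (t0 - 1))) * emeasure L' {t0 - 1..t0} \<le> emeasure L {..t0}"
proof -
  interpret L': prob_space L' by fact
  have sp: "space L' = UNIV" using L'(2) sets_eq_imp_space_eq by fastforce
  have "emeasure L {..t0} = (\<integral>\<^sup>+t. indicator {..t0} t \<partial>L)"
    using L by (subst nn_integral_indicator) auto
  also have "\<dots> = (\<integral>\<^sup>+t. ennreal (C * exp (lam * t)) * indicator {..t0} t \<partial>L')"
    using t unfolding tilt_def by auto
  finally have eq: "emeasure L {..t0} = (\<integral>\<^sup>+t. ennreal (C * exp (lam * t)) * indicator {..t0} t \<partial>L')" .
  have "(\<integral>\<^sup>+t. ennreal (C * exp (lam * t)) * indicator {..t0} t \<partial>L') \<le> (\<integral>\<^sup>+t. ennreal (C * exp (lam * t0)) \<partial>L')"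
  proof (rule nn_integral_mono)
    fix t
    show "ennreal (C * exp (lam * t)) * indicator {..t0} t \<le> ennreal (C * exp (lam * t0))"
    proof (cases "t \<le> t0")
      case True
      then have "lam * t \<le> lam * t0" using lam by (intro mult_left_mono) auto
      then have "C * exp (lam * t) \<le> C * exp (lam * t0)" using C by (intro mult_left_mono) auto
      then show ?thesis using True by (simp add: ennreal_leI)
    qed simp
  qed
  also have "\<dots> = ennreal (C * exp (lam * t0))" using L'.emeasure_space_1 sp by simp
  finally show "emeasure L {..t0} \<le> ennreal (C * exp (lam * t0))" unfolding eq .
  have "ennreal (C * exp (lam * (t0 - 1))) * emeasure L' {t0 - 1..t0} = (\<integral>\<^sup>+t. ennreal (C * exp (lam * (t0 - 1))) * indicator {t0 - 1..t0} t \<partial>L')"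
    using L'(2) by (subst nn_integral_cmult_indicator) auto
  also have "\<dots> \<le> (\<integral>\<^sup>+t. ennreal (C * exp (lam * t)) * indicator {..t0} t \<partial>L')"
  proof (rule nn_integral_mono)
    fix t
    show "ennreal (C * exp (lam * (t0 - 1))) * indicator {t0 - 1..t0} t \<le> ennreal (C * exp (lam * t)) * indicator {..t0} t"
    proof (cases "t \<in> {t0 - 1..t0}")
      case True
      then have "lam * (t0 - 1) \<le> lam * t" using lam by (intro mult_left_mono) auto
      then have "C * exp (lam * (t0 - 1)) \<le> C * exp (lam * t)" using C by (intro mult_left_mono) auto
      then show ?thesis using True by (simp add: ennreal_leI)
    qed simp
  qed
  finally show "ennreal (C * exp (lam * (t0 - 1))) * emeasure L' {t0 - 1..t0} \<le> emeasure L {..t0}" unfolding eq .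
qed



lemma C_identity:
  fixes x y z u lam :: real and n k :: nat
  assumes u: "u > 0" and n: "n = Suc k" and rate: "f = lam * x / u + ln u / 2 - lam * z"
  shows "exp (- lam * (real n * x) / u) / sqrt u * (1 / sqrt u)^k * exp (lam * (real n * z)) = exp (- real n * f)"
proof -
  have "1 / sqrt u = exp (- ln u / 2)"
    using u by (simp add: sqrt_def exp_minus ln_sqrt[symmetric] inverse_eq_divide)
  then have p: "(1 / sqrt u)^k = exp (real k * (- ln u / 2))"
    by (simp only: exp_of_nat_mult[symmetric])
  have q: "exp (- lam * (real n * x) / u) / sqrt u = exp (- lam * (real n * x) / u) * exp (- ln u / 2)"
    unfolding \<open>1 / sqrt u = exp (- ln u / 2)\<close>[symmetric] by simp
  have "exp (- lam * (real n * x) / u) / sqrt u * (1 / sqrt u)^k * exp (lam * (real n * z))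
      = exp (- lam * (real n * x) / u + (- ln u / 2) + real k * (- ln u / 2) + lam * (real n * z))"
    unfolding q p by (simp only: exp_add)
  also have "- lam * (real n * x) / u + (- ln u / 2) + real k * (- ln u / 2) + lam * (real n * z) = - real n * f"
    unfolding rate n by (simp add: field_simps)
  finally show ?thesis .
qed

lemma q_bound:
  fixes x u v b :: real and n k :: nat
  assumes x: "x > 0" and u: "u > 0" and v: "v > 0" and tau: "\<tau> > 0" and tau2: "\<tau>^2 = v"
    and n: "n = Suc k" and b: "b = sqrt (real n * x) / u"
  shows "normal_density 0 \<tau> ((1 + (\<tau>^2 + 6 * \<tau>^2 * sqrt k)) / b) / (2 * sqrt (b^2 + (\<tau>^2 + 6 * \<tau>^2 * sqrt k)))
     \<ge> normal_density 0 \<tau> ((1 + 7 * v) * u / sqrt x) / (2 * sqrt (x / u^2 + 7 * v) * sqrt (real n))"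
proof -
  have n1: "real n \<ge> 1" using n by simp
  have skn: "sqrt (real k) \<le> sqrt (real n)" using n by simp
  have sn1: "sqrt (real n) \<ge> 1" using n1 by simp
  have skn2: "sqrt (real k) \<le> real n"
  proof -
    have "sqrt (real n) * 1 \<le> sqrt (real n) * sqrt (real n)" by (intro mult_left_mono) (use sn1 in auto)
    then have "sqrt (real n) \<le> real n" by simp
    then show ?thesis using skn by linarith
  qed
  have bpos: "b > 0" unfolding b using x u n by simp
  have b2: "b^2 = real n * x / u^2" unfolding b using x u by (simp add: power_divide)
  have bsn: "b = sqrt (real n) * sqrt x / u" unfolding b by (simp add: real_sqrt_mult)
  define D where "D = v + 6 * v * sqrt k"
  have D0: "D \<ge> 0" unfolding D_def using v by simp
  have e1: "(1 + (\<tau>^2 + 6 * \<tau>^2 * sqrt k)) = 1 + D" unfolding D_def tau2 ..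
  have e2: "b^2 + (\<tau>^2 + 6 * \<tau>^2 * sqrt k) = b^2 + D" unfolding D_def tau2 ..
  have m1: "(1 + D) / b \<le> (1 + 7 * v) * u / sqrt x"
  proof -
    have "1 + D \<le> (1 + 7 * v) * sqrt (real n)"
    proof -
      have h1: "v \<le> v * sqrt (real n)" using v sn1 by simp
      have h2: "v * sqrt k \<le> v * sqrt (real n)" using skn v by simp
      have e: "(1 + 7 * v) * sqrt (real n) = sqrt (real n) + v * sqrt (real n) + 6 * (v * sqrt (real n))" by (simp add: algebra_simps)
      have D': "D = v + 6 * (v * sqrt k)" unfolding D_def by simp
      show ?thesis unfolding e D' using h1 h2 sn1 by linarith
    qed
    then have "(1 + D) / b \<le> (1 + 7 * v) * sqrt (real n) / b" using bpos by (simp add: divide_right_mono)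
    also have "\<dots> = (1 + 7 * v) * u / sqrt x" unfolding bsn using u x n by (simp add: field_simps)
    finally show ?thesis .
  qed
  have f1: "normal_density 0 \<tau> ((1 + D) / b) \<ge> normal_density 0 \<tau> ((1 + 7 * v) * u / sqrt x)"
    by (rule nd_mono[OF tau]) (use m1 D0 bpos in simp)
  have s1: "sqrt (b^2 + D) \<le> sqrt (x / u^2 + 7 * v) * sqrt (real n)"
  proof -
    have "b^2 + D \<le> real n * (x / u^2 + 7 * v)"
    proof -
      have "v \<le> v * real n" using v n1 by simp
      moreover have "6 * v * sqrt k \<le> 6 * v * real n" using skn2 v by simp
      ultimately show ?thesis unfolding b2 D_def by (simp add: algebra_simps)
    qed
    then have "sqrt (b^2 + D) \<le> sqrt (real n * (x / u^2 + 7 * v))" by simp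
    then show ?thesis by (simp add: real_sqrt_mult mult.commute)
  qed
  have pos: "0 < 2 * sqrt (b^2 + D)" using bpos D0 by (simp add: add_pos_nonneg)
  show ?thesis unfolding e1 e2
    by (rule frac_le) (use f1 s1 pos in auto)
qed

lemma core:
  fixes x y z :: real
  assumes x: "x > 0" and y: "y > 0" and z: "z > 0" and zxy: "z \<le> x + y"
  shows "\<exists>\<kappa>>0. \<exists>N. \<forall>n\<ge>N. \<forall>s :: nat \<Rightarrow> real.
           (\<Sum>i<n. (s i)\<^sup>2) / real n = x \<longrightarrow>
           (let P = measure (gauss_vec n y)
                      {w \<in> space (gauss_vec n y). (\<Sum>i<n. (w i - s i)\<^sup>2) / real n \<le> z}
            in \<kappa> / sqrt (real n) * exp (- real n * rate_f x y z) \<le> P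
               \<and> P \<le> exp (- real n * rate_f x y z))"
proof -
  define u where "u = 2 * x / cA x y z"
  define lam where "lam = (u - 1) / (2 * y)"
  have PR: "cA x y z > 0" "u \<ge> 1" "lam \<ge> 0" "1 + 2 * lam * y = u" "z = x / u^2 + y / u"
    "rate_f x y z = lam * x / u + ln u / 2 - lam * z"
    using params[OF x y z zxy] unfolding u_def[symmetric] lam_def[symmetric] by auto
  have u0: "u > 0" using PR(2) by simp
  define \<sigma> where "\<sigma> = sqrt y"
  have s0: "\<sigma> > 0" unfolding \<sigma>_def using y by simp
  have s2: "\<sigma>^2 = y" unfolding \<sigma>_def using y by simp
  have eu: "1 + 2 * lam * \<sigma>^2 = u" unfolding s2 by (rule PR(4))
  define \<tau> where "\<tau> = \<sigma> / sqrt u"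
  have t0: "\<tau> > 0" unfolding \<tau>_def using s0 u0 by simp
  define v where "v = y / u"
  have v0: "v > 0" unfolding v_def using y u0 by simp
  have t2: "\<tau>^2 = v" unfolding \<tau>_def v_def using u0 by (simp add: power_divide s2)
  define M1 where "M1 = (1 + 7 * v) * u / sqrt x"
  define K1 where "K1 = x / u^2 + 7 * v"
  have K1: "K1 > 0" unfolding K1_def using x u0 v0 by (intro add_pos_pos divide_pos_pos) auto
  define \<kappa> where "\<kappa> = exp (- lam) * normal_density 0 \<tau> M1 / (4 * sqrt K1)"
  define c0 where "c0 = (1 + 6 * v) * u^2 / x"
  define N where "N = max 5 (nat \<lceil>c0^2\<rceil>)"
  show ?thesis
  proof (intro exI[of _ \<kappa>] conjI exI[of _ N] allI impI)
    show "\<kappa> > 0" unfolding \<kappa>_def using K1 t0 by (simp add: normal_density_pos)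
    fix n :: nat and s :: "nat \<Rightarrow> real"
    assume nN: "N \<le> n" and hs: "(\<Sum>i<n. (s i)\<^sup>2) / real n = x"
    have n5: "n \<ge> 5" using nN unfolding N_def by simp
    then obtain k where nk: "n = Suc k" by (cases n) auto
    have k4: "k \<ge> 4" using n5 nk by simp
    have npos: "real n > 0" using n5 by simp
    have hsum: "(\<Sum>i<Suc k. (s i)^2) = real n * x" using hs npos nk by (simp add: field_simps)
    define a where "a = sqrt (real n * x)"
    define b where "b = a / u"
    have b0: "b > 0" unfolding b_def a_def using x npos u0 by simp
    have a2: "a^2 = real n * x" unfolding a_def using x npos by simp
    have b2: "b^2 = real n * x / u^2" unfolding b_def using a2 by (simp add: power_divide)
    have sn: "sqrt (real n) \<ge> c0"
    proof -
      have "nat \<lceil>c0^2\<rceil> \<le> n" using nN unfolding N_def by simp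
      then have "\<lceil>c0^2\<rceil> \<le> int n" by linarith
      then have "real_of_int \<lceil>c0^2\<rceil> \<le> real n" by linarith
      then have "real n \<ge> c0^2" using le_of_int_ceiling[of "c0^2"] by linarith
      then have "sqrt (real n) \<ge> sqrt (c0^2)" by (rule real_sqrt_le_mono)
      then have "\<bar>c0\<bar> \<le> sqrt (real n)" by simp
      then show ?thesis using abs_ge_self[of c0] by linarith
    qed
    have sn1: "sqrt (real n) \<ge> 1" using n5 by simp
    have skn: "sqrt (real k) \<le> sqrt (real n)" using nk by simp
    have H1: "b^2 + \<tau>^2 - 6 * \<tau>^2 * sqrt k \<ge> 1"
    proof -
      have ss: "sqrt (real n) * sqrt (real n) = real n" using npos by simp
      have "real n * x / u^2 = sqrt (real n) * (sqrt (real n) * x / u^2)"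
        by (simp only: times_divide_eq_right mult.assoc[symmetric] ss)
      also have "\<dots> \<ge> sqrt (real n) * (c0 * x / u^2)"
        using sn x u0 by (intro mult_left_mono divide_right_mono) auto
      also have "c0 * x / u^2 = 1 + 6 * v" unfolding c0_def using x u0 by (simp add: field_simps)
      also have "sqrt (real n) * (1 + 6 * v) \<ge> 1 + 6 * v * sqrt k"
      proof -
        have h: "6 * v * sqrt k \<le> 6 * v * sqrt (real n)" using skn v0 by simp
        have "sqrt (real n) * (1 + 6 * v) = sqrt (real n) + 6 * v * sqrt (real n)" by (simp add: algebra_simps)
        then show ?thesis using h sn1 by linarith
      qed
      finally have "b^2 \<ge> 1 + 6 * v * sqrt k" unfolding b2 .
      then show ?thesis unfolding t2 using v0 by simp
    qed
    let ?S = "\<lambda>w. \<Sum>i<Suc k. (w i - s i)^2"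
    have G: "gauss_vec n y = PiM {0..<Suc k} (\<lambda>i. NN \<sigma>)" unfolding gv nk \<sigma>_def ..
    interpret NNp: prob_space "NN \<sigma>" by (rule prob_NN[OF s0])
    interpret PG: prob_space "PiM {0..<Suc k} (\<lambda>i. NN \<sigma>)"
      by (rule prob_space_PiM) (simp add: NNp.prob_space_axioms)
    define L where "L = (DD \<sigma> a \<star> Chi \<sigma> k)"
    define L' where "L' = (DD \<tau> b \<star> Chi \<tau> k)"
    define C where "C = exp (- lam * (real n * x) / u) / sqrt u * (1 / sqrt u)^k"
    have C0: "C \<ge> 0" unfolding C_def using u0 by simp
    have redu: "distr (PiM {0..<Suc k} (\<lambda>i. NN \<sigma>)) borel ?S = L"
      unfolding L_def a_def using reduce[OF s0, of k s] hsum by simp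
    have setE: "{w \<in> space (gauss_vec n y). (\<Sum>i<n. (w i - s i)\<^sup>2) / real n \<le> z}
        = ?S -` {..real n * z} \<inter> space (PiM {0..<Suc k} (\<lambda>i. NN \<sigma>))"
      unfolding G using npos nk by (auto simp: divide_le_eq mult.commute)
    have PL: "measure (gauss_vec n y) {w \<in> space (gauss_vec n y). (\<Sum>i<n. (w i - s i)\<^sup>2) / real n \<le> z}
        = measure L {..real n * z}"
      unfolding setE unfolding G redu[symmetric] by (subst measure_distr[OF meas_S]) auto
    have tL: "tilt L L' C lam"
    proof -
      have tD: "tilt (DD \<sigma> a) (DD \<tau> b) (exp (- lam * a^2 / u) / sqrt u) lam"
        using tilt_DD[OF s0, of lam a] eu u0 unfolding \<tau>_def b_def by simp
      have tC: "tilt (Chi \<sigma> k) (Chi \<tau> k) ((1 / sqrt u)^k) lam"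
        using tilt_Chi[OF s0, of lam k] eu u0 unfolding \<tau>_def by simp
      have "tilt L L' (exp (- lam * a^2 / u) / sqrt u * (1 / sqrt u)^k) lam"
        unfolding L_def L'_def
        by (rule tilt_conv[OF _ _ _ _ _ _ _ _ tD tC]) (use s0 t0 u0 in \<open>auto intro: fDD fChi\<close>)
      then show ?thesis unfolding C_def a2 .
    qed
    have PL': "prob_space L'" unfolding L'_def by (rule prob_conv) (auto intro: prob_DD prob_Chi t0)
    have PLL: "prob_space L" unfolding L_def by (rule prob_conv) (auto intro: prob_DD prob_Chi s0)
    interpret LL: prob_space L by (rule PLL)
    have sL: "sets L = sets borel" "sets L' = sets borel" unfolding L_def L'_def by auto
    note TB = tilt_bounds[OF PL' sL(2) sL(1) tL C0 PR(3), of "real n * z"]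
    have Cid: "C * exp (lam * (real n * z)) = exp (- real n * rate_f x y z)"
      unfolding C_def by (rule C_identity[OF u0 nk PR(6)])
    have t0eq: "real n * z = b^2 + (real k + 1) * \<tau>^2"
    proof -
      have "real n * z = real n * (x / u^2 + y / u)" using PR(5) by simp
      also have "\<dots> = b^2 + (real k + 1) * \<tau>^2" unfolding b2 t2 v_def using nk by (simp add: algebra_simps)
      finally show ?thesis .
    qed
    have loc: "emeasure L' {real n * z - 1 .. real n * z} \<ge>
       ennreal (normal_density 0 \<tau> ((1 + (\<tau>^2 + 6 * \<tau>^2 * sqrt k)) / b) / (2 * sqrt (b^2 + (\<tau>^2 + 6 * \<tau>^2 * sqrt k))) * (1/2))"
      unfolding L'_def by (rule local_est[OF t0 b0 k4 t0eq H1])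
    have qb: "normal_density 0 \<tau> ((1 + (\<tau>^2 + 6 * \<tau>^2 * sqrt k)) / b) / (2 * sqrt (b^2 + (\<tau>^2 + 6 * \<tau>^2 * sqrt k)))
       \<ge> normal_density 0 \<tau> M1 / (2 * sqrt K1 * sqrt (real n))"
      unfolding M1_def K1_def by (rule q_bound[OF x u0 v0 t0 t2 nk]) (simp add: b_def a_def)
    define R where "R = exp (- real n * rate_f x y z)"
    have R0: "R > 0" unfolding R_def by simp
    have lowR: "\<kappa> / sqrt (real n) * R \<le> C * exp (lam * (real n * z - 1)) * (normal_density 0 \<tau> M1 / (2 * sqrt K1 * sqrt (real n)) * (1/2))"
    proof -
      have "C * exp (lam * (real n * z - 1)) = R * exp (- lam)"
        unfolding R_def Cid[symmetric] by (simp add: algebra_simps exp_diff exp_minus divide_inverse)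
      then show ?thesis unfolding \<kappa>_def by (simp add: field_simps)
    qed
    have low: "ennreal (\<kappa> / sqrt (real n) * R) \<le> emeasure L {..real n * z}"
    proof -
      have "ennreal (\<kappa> / sqrt (real n) * R) \<le> ennreal (C * exp (lam * (real n * z - 1)) * (normal_density 0 \<tau> M1 / (2 * sqrt K1 * sqrt (real n)) * (1/2)))"
        using lowR by (rule ennreal_leI)
      also have "\<dots> = ennreal (C * exp (lam * (real n * z - 1))) * ennreal (normal_density 0 \<tau> M1 / (2 * sqrt K1 * sqrt (real n)) * (1/2))"
        using C0 K1 by (intro ennreal_mult) auto
      also have "\<dots> \<le> ennreal (C * exp (lam * (real n * z - 1))) * emeasure L' {real n * z - 1 .. real n * z}"
      proof (intro mult_left_mono)
        have "ennreal (normal_density 0 \<tau> M1 / (2 * sqrt K1 * sqrt (real n)) * (1/2)) \<le>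
          ennreal (normal_density 0 \<tau> ((1 + (\<tau>^2 + 6 * \<tau>^2 * sqrt k)) / b) / (2 * sqrt (b^2 + (\<tau>^2 + 6 * \<tau>^2 * sqrt k))) * (1/2))"
          using qb by (intro ennreal_leI) auto
        then show "ennreal (normal_density 0 \<tau> M1 / (2 * sqrt K1 * sqrt (real n)) * (1/2)) \<le> emeasure L' {real n * z - 1 .. real n * z}"
          using loc by (rule order_trans)
      qed simp
      also have "\<dots> \<le> emeasure L {..real n * z}" by (rule TB(2))
      finally show ?thesis .
    qed
    have up: "emeasure L {..real n * z} \<le> ennreal R" using TB(1) unfolding Cid R_def .
    have mL: "emeasure L {..real n * z} = ennreal (measure L {..real n * z})" by (rule LL.emeasure_eq_measure)
    have k0: "\<kappa> / sqrt (real n) * R \<ge> 0" using R0 \<open>\<kappa> > 0\<close> by simp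
    show "let P = measure (gauss_vec n y) {w \<in> space (gauss_vec n y). (\<Sum>i<n. (w i - s i)\<^sup>2) / real n \<le> z}
          in \<kappa> / sqrt (real n) * exp (- real n * rate_f x y z) \<le> P \<and> P \<le> exp (- real n * rate_f x y z)"
      unfolding Let_def PL R_def[symmetric]
      using low up unfolding mL using R0 k0 by (auto simp: ennreal_le_iff)
  qed
qed

theorem mainTheorem9:
  fixes x y z :: real
  assumes "x > 0" and "y > 0" and "z > 0"
  shows "\<exists>\<kappa>>0. \<exists>N. \<forall>n\<ge>N. \<forall>s :: nat \<Rightarrow> real.
           (\<Sum>i<n. (s i)\<^sup>2) / real n = x \<longrightarrow>
           (let P = measure (gauss_vec n y)
                      {w \<in> space (gauss_vec n y). (\<Sum>i<n. (w i - s i)\<^sup>2) / real n \<le> z}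
            in \<kappa> / sqrt (real n) * exp (- real n * rate_f x y z) \<le> P
               \<and> P \<le> exp (- real n * rate_f x y z))"
proof (cases "z \<le> x + y")
  case True
  show ?thesis by (rule core[OF assms True])
next
  case False
  have xy: "x + y > 0" using assms by simp
  obtain \<kappa> N where k0: "\<kappa> > 0" and H: "\<forall>n\<ge>N. \<forall>s :: nat \<Rightarrow> real.
           (\<Sum>i<n. (s i)\<^sup>2) / real n = x \<longrightarrow>
           (let P = measure (gauss_vec n y)
                      {w \<in> space (gauss_vec n y). (\<Sum>i<n. (w i - s i)\<^sup>2) / real n \<le> x + y}
            in \<kappa> / sqrt (real n) * exp (- real n * rate_f x y (x + y)) \<le> P
               \<and> P \<le> exp (- real n * rate_f x y (x + y)))"
    using core[OF assms(1,2) xy order_refl] by blast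
  have r0: "rate_f x y z = 0" unfolding rate_f_def using False by simp
  have r1: "rate_f x y (x + y) = 0" by (rule rate_zero[OF assms(1,2)])
  show ?thesis
  proof (intro exI[of _ \<kappa>] conjI exI[of _ N] allI impI)
    show "\<kappa> > 0" by (rule k0)
    fix n :: nat and s :: "nat \<Rightarrow> real"
    assume nN: "N \<le> n" and hs: "(\<Sum>i<n. (s i)\<^sup>2) / real n = x"
    interpret NNp: prob_space "NN (sqrt y)" by (rule prob_NN) (use assms in simp)
    interpret G: prob_space "gauss_vec n y" unfolding gv
      by (rule prob_space_PiM) (simp add: NNp.prob_space_axioms)
    have low: "\<kappa> / sqrt (real n) \<le> measure (gauss_vec n y)
                      {w \<in> space (gauss_vec n y). (\<Sum>i<n. (w i - s i)\<^sup>2) / real n \<le> x + y}"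
      using H nN hs r1 by (auto simp: Let_def)
    have mS: "(\<lambda>w. \<Sum>i<n. (w i - s i)\<^sup>2) \<in> borel_measurable (gauss_vec n y)"
      unfolding gv using meas_S[where n=n and s=s and \<sigma>="sqrt y"] by simp
    have mono: "measure (gauss_vec n y) {w \<in> space (gauss_vec n y). (\<Sum>i<n. (w i - s i)\<^sup>2) / real n \<le> x + y}
        \<le> measure (gauss_vec n y) {w \<in> space (gauss_vec n y). (\<Sum>i<n. (w i - s i)\<^sup>2) / real n \<le> z}"
    proof (rule G.finite_measure_mono)
      show "{w \<in> space (gauss_vec n y). (\<Sum>i<n. (w i - s i)\<^sup>2) / real n \<le> x + y}
          \<subseteq> {w \<in> space (gauss_vec n y). (\<Sum>i<n. (w i - s i)\<^sup>2) / real n \<le> z}" using False by auto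
      show "{w \<in> space (gauss_vec n y). (\<Sum>i<n. (w i - s i)\<^sup>2) / real n \<le> z} \<in> sets (gauss_vec n y)"
        using mS by measurable
    qed
    show "let P = measure (gauss_vec n y)
                      {w \<in> space (gauss_vec n y). (\<Sum>i<n. (w i - s i)\<^sup>2) / real n \<le> z}
            in \<kappa> / sqrt (real n) * exp (- real n * rate_f x y z) \<le> P
               \<and> P \<le> exp (- real n * rate_f x y z)"
      unfolding Let_def r0 using low mono G.prob_le_1 by auto
  qed
qed

end
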